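(* Let $G$ be a finite group. (a) Every element of $G$ of prime order is an isolated vertex of the undeleted difference graph of $G$. (b) If every non-identity element of $G$ has prime order, then $\mathcal{D}(G)$ is null (has no edges).
   Context: For a finite group $G$ with identity $e$: the intersection power graph $\mathcal{G}_I(G)$ has vertex set $G$, two distinct non-identity vertices $x,y$ being adjacent iff $\langle x\rangle\cap\langle y\rangle\neq\{e\}$, and $e$ being adjacent to every other vertex. The power graph $\mathcal{P}(G)$ has vertex set $G$, two distinct vertices being adjacent iff one is a power of the other. The undeleted difference graph of $G$ has vertex set $G$ and edge set $E(\mathcal{G}_I(G))\setminus E(\mathcal{P}(G))$; the difference graph $\mathcal{D}(G)$ is obtained from it by deleting all isolated vertices. *)

theory Defs
  imports "HOL-Algebra.Algebra" "HOL-Computational_Algebra.Primes"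
begin

definition ipg_adj :: "('a, 'b) monoid_scheme \<Rightarrow> 'a \<Rightarrow> 'a \<Rightarrow> bool" where
  "ipg_adj G x y \<longleftrightarrow> x \<in> carrier G \<and> y \<in> carrier G \<and> x \<noteq> y \<and>
     (x = \<one>\<^bsub>G\<^esub> \<or> y = \<one>\<^bsub>G\<^esub> \<or>
      generate G {x} \<inter> generate G {y} \<noteq> {\<one>\<^bsub>G\<^esub>})"

definition power_adj :: "('a, 'b) monoid_scheme \<Rightarrow> 'a \<Rightarrow> 'a \<Rightarrow> bool" where
  "power_adj G x y \<longleftrightarrow> x \<in> carrier G \<and> y \<in> carrier G \<and> x \<noteq> y \<and>
     ((\<exists>n::int. y = x [^]\<^bsub>G\<^esub> n) \<or> (\<exists>n::int. x = y [^]\<^bsub>G\<^esub> n))"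

definition diff_adj :: "('a, 'b) monoid_scheme \<Rightarrow> 'a \<Rightarrow> 'a \<Rightarrow> bool" where
  "diff_adj G x y \<longleftrightarrow> ipg_adj G x y \<and> \<not> power_adj G x y"

definition isolated_in_undeleted_diff :: "('a, 'b) monoid_scheme \<Rightarrow> 'a \<Rightarrow> bool" where
  "isolated_in_undeleted_diff G x \<longleftrightarrow> x \<in> carrier G \<and> (\<forall>y \<in> carrier G. \<not> diff_adj G x y)"

definition diff_graph_vertices :: "('a, 'b) monoid_scheme \<Rightarrow> 'a set" where
  "diff_graph_vertices G = {x \<in> carrier G. \<not> isolated_in_undeleted_diff G x}"

definition diff_graph_edges :: "('a, 'b) monoid_scheme \<Rightarrow> 'a set set" where
  "diff_graph_edges G = {{x, y} | x y. x \<in> diff_graph_vertices G \<and> y \<in> diff_graph_vertices G \<and> diff_adj G x y}"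

end

theory Submission
  imports Defs
begin

lemma key:
  fixes G (structure)
  assumes gr: "group G" and fin: "finite (carrier G)"
    and x: "x \<in> carrier G" and p: "x = \<one> \<or> Factorial_Ring.prime (group.ord G x)"
    and y: "y \<in> carrier G"
  shows "\<not> diff_adj G x y"
proof
  interpret group G by (rule gr)
  assume d: "diff_adj G x y"
  hence ip: "ipg_adj G x y" and np: "\<not> power_adj G x y" by (auto simp: diff_adj_def)
  have xy: "x \<noteq> y" using ip by (simp add: ipg_adj_def)
  have "x \<noteq> \<one>"
  proof
    assume "x = \<one>"
    hence "x = y [^] (0::int)" using y by simp
    hence "power_adj G x y" using x y xy unfolding power_adj_def by blast
    thus False using np by blast
  qed
  have "y \<noteq> \<one>"
  proof
    assume "y = \<one>"
    hence "y = x [^] (0::int)" using x by simp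
    hence "power_adj G x y" using x y xy unfolding power_adj_def by blast
    thus False using np by blast
  qed
  with \<open>x \<noteq> \<one>\<close> ip have "generate G {x} \<inter> generate G {y} \<noteq> {\<one>}"
    by (simp add: ipg_adj_def)
  moreover have "\<one> \<in> generate G {x} \<inter> generate G {y}"
    by (simp add: generate.one)
  ultimately obtain z where zx: "z \<in> generate G {x}" and zy: "z \<in> generate G {y}" and z1: "z \<noteq> \<one>"
    by blast
  have pr: "Factorial_Ring.prime (ord x)" using p \<open>x \<noteq> \<one>\<close> by simp
  obtain k :: int where k: "z = x [^] k" using zx generate_pow[OF x] by blast
  have zc: "z \<in> carrier G" using k x by simp
  have "z [^] ord x = \<one>"
  proof -
    have "z [^] ord x = z [^] (int (ord x))" by (simp add: int_pow_int)
    also have "\<dots> = x [^] (k * int (ord x))" using k x by (simp add: int_pow_pow)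
    also have "\<dots> = (x [^] (int (ord x))) [^] k" using x by (simp add: int_pow_pow mult.commute)
    also have "\<dots> = \<one>" using x by (simp add: int_pow_int)
    finally show ?thesis .
  qed
  hence "ord z dvd ord x" using pow_eq_id[OF zc] by simp
  moreover have "ord z \<noteq> 1" using ord_eq_1[OF zc] z1 by simp
  ultimately have oz: "ord z = ord x" using pr by (meson prime_nat_iff)
  have sub1: "generate G {z} \<subseteq> generate G {x}"
    using zx x by (intro generate_subgroup_incl generate_is_subgroup) auto
  have sub2: "generate G {z} \<subseteq> generate G {y}"
    using zy y by (intro generate_subgroup_incl generate_is_subgroup) auto
  have fx: "finite (generate G {x})"
    using fin generate_incl[of "{x}"] x by (meson empty_subsetI insert_subset rev_finite_subset)
  have "card (generate G {z}) = card (generate G {x})"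
    using generate_pow_card[OF zc] generate_pow_card[OF x] oz by simp
  hence "generate G {z} = generate G {x}" using sub1 fx by (simp add: card_subset_eq)
  hence "x \<in> generate G {y}" using sub2 generate.incl[of x "{x}" G] by auto
  then obtain n :: int where "x = y [^] n" using generate_pow[OF y] by blast
  hence "power_adj G x y" using x y xy unfolding power_adj_def by blast
  thus False using np by blast
qed

theorem proposition2p3:
  fixes G (structure)
  assumes "group G" and "finite (carrier G)"
  shows "(\<forall>x \<in> carrier G. Factorial_Ring.prime (group.ord G x) \<longrightarrow> isolated_in_undeleted_diff G x)
     \<and> ((\<forall>x \<in> carrier G. x \<noteq> \<one> \<longrightarrow> Factorial_Ring.prime (group.ord G x)) \<longrightarrow> diff_graph_edges G = {})"
proof
  show "\<forall>x \<in> carrier G. Factorial_Ring.prime (group.ord G x) \<longrightarrow> isolated_in_undeleted_diff G x"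
    using key[OF assms] by (auto simp: isolated_in_undeleted_diff_def)
  show "(\<forall>x \<in> carrier G. x \<noteq> \<one> \<longrightarrow> Factorial_Ring.prime (group.ord G x)) \<longrightarrow> diff_graph_edges G = {}"
  proof
    assume h: "\<forall>x \<in> carrier G. x \<noteq> \<one> \<longrightarrow> Factorial_Ring.prime (group.ord G x)"
    have "\<And>x y. x \<in> carrier G \<Longrightarrow> y \<in> carrier G \<Longrightarrow> \<not> diff_adj G x y"
      using key[OF assms] h by blast
    thus "diff_graph_edges G = {}"
      by (auto simp: diff_graph_edges_def diff_graph_vertices_def)
  qed
qed

end
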